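(* Let $H:\mathbb{R}^d\to\mathbb{R}^y$ satisfy, for constants $0<K_L\le K_U$, $$K_L\|\mathbf{x}_1-\mathbf{x}_2\| \le \|H(\mathbf{x}_1)-H(\mathbf{x}_2)\| \le K_U\|\mathbf{x}_1-\mathbf{x}_2\|\quad\text{for all }\mathbf{x}_1,\mathbf{x}_2\in\mathbb{R}^d,$$ with $\|\cdot\|$ the Euclidean norm. Let $\mathcal{D}$ be a distribution on $\mathbb{R}^d$ of natural queries, let $\mathbf{x},\mathbf{x}_1,\mathbf{x}_2$ be drawn from $\mathcal{D}$ with $\mathbf{x}_1,\mathbf{x}_2$ independent, and let $M_{\mathcal{D}} = \mathbb{E}[\|\mathbf{x}_1-\mathbf{x}_2\|]<\infty$. Let $\beta>0$ and let $\boldsymbol{\delta}\sim\mathcal{N}(0,\beta^2\mathbf{I}_d)$ be independent of $\mathbf{x}$. For a threshold $\tau>0$ define the detection rate $\alpha^{det}=\mathbb{P}[\|H(\mathbf{x})-H(\mathbf{x}+\boldsymbol{\delta})\|\le\tau]$ and the false positive rate $\alpha^{fp}=\mathbb{P}[\|H(\mathbf{x}_1)-H(\mathbf{x}_2)\|\le\tau]$, and assume $\alpha^{fp}<1$. Then $$\alpha^{det} \le \frac{1}{\Gamma(\frac d2)}\,\gamma\!\left(\frac d2,\ \frac12\left(\frac{K_U}{K_L}\,\frac{M_{\mathcal{D}}}{\beta}\,\frac{1}{1-\alpha^{fp}}\right)^{2}\right),$$ where $\gamma(s,x)=\int_0^x t^{s-1}e^{-t}\,dt$ is the lower incomplete Gamma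 function and $\Gamma(s)=\int_0^\infty t^{s-1}e^{-t}\,dt$ is the Gamma function.
   Context: Stateful defense model: a query is flagged as an attack query if and only if its feature vector under $H$ lies within Euclidean distance $\tau$ of the feature vector of some historical query. The attack query is $\mathbf{x}+\boldsymbol{\delta}$ with historical query $\mathbf{x}$; a false positive occurs when two independent natural queries $\mathbf{x}_1,\mathbf{x}_2$ have features within distance $\tau$. *)

theory Defs
  imports "HOL-Probability.Probability"
begin

definition gaussian_iso :: "real \<Rightarrow> (real ^ 'd) measure" where
  "gaussian_iso \<beta> = density lborel
     (\<lambda>v. ennreal ((2 * pi * \<beta>\<^sup>2) powr (- (real CARD('d) / 2))
                     * exp (- (norm v)\<^sup>2 / (2 * \<beta>\<^sup>2))))"

definition lower_inc_gamma :: "real \<Rightarrow> real \<Rightarrow> real" where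
  "lower_inc_gamma s x = (LBINT t=0..x. t powr (s - 1) * exp (- t))"

end

theory Submission
  imports Defs
begin

lemma nn_exp_tail: "(\<integral>\<^sup>+w. ennreal (exp (-w)) * indicator {a..} w \<partial>lborel) = ennreal (exp (-a))"
  using nn_integral_has_integral_lebesgue'[OF _ has_integral_exp_minus_to_infinity[of 1 a]] by simp

lemma nn_exp_tail': "(\<integral>\<^sup>+w. (if a \<le> w then ennreal (exp (-w)) else 0) \<partial>lborel) = ennreal (exp (-a))"
  by (subst nn_exp_tail[symmetric]) (auto intro!: nn_integral_cong simp: indicator_def)

lemma nn_powr_0: assumes "0 < s" "0 \<le> m"
  shows "(\<integral>\<^sup>+t. ennreal (t powr (s-1)) * indicator {0..m} t \<partial>lborel) = ennreal (m powr s / s)"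
  using nn_integral_has_integral_lebesgue'[OF _ has_integral_powr_from_0[of "s-1" m]] assms by simp

lemma stepA:
  fixes r \<beta> :: real
  assumes b: "0 < \<beta>" and r: "0 \<le> r"
  defines "R \<equiv> r\<^sup>2 / (2*\<beta>\<^sup>2)"
  shows "(\<integral>\<^sup>+v. (if norm v \<le> r then ennreal (exp (-(norm (v::real^'d))\<^sup>2/(2*\<beta>\<^sup>2))) else 0) \<partial>lborel)
    = (\<integral>\<^sup>+w. (if 0 \<le> w then ennreal (exp (-w) * (unit_ball_vol (real CARD('d)) * (2*\<beta>\<^sup>2) powr (real CARD('d)/2))
            * min R w powr (real CARD('d)/2)) else 0) \<partial>lborel)"
proof -
  define q where "q = (\<lambda>v::real^'d. (norm v)\<^sup>2/(2*\<beta>\<^sup>2))"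
  define \<rho> where "\<rho> = (\<lambda>w. min r (sqrt (2*\<beta>\<^sup>2*w)))"
  define d where "d = CARD('d)"
  have "(\<integral>\<^sup>+v. (if norm v \<le> r then ennreal (exp (-(norm (v::real^'d))\<^sup>2/(2*\<beta>\<^sup>2))) else 0) \<partial>lborel)
     = (\<integral>\<^sup>+v. \<integral>\<^sup>+w. (if q v \<le> w \<and> norm v \<le> r then ennreal (exp (-w)) else 0) \<partial>lborel \<partial>lborel)"
    apply (rule nn_integral_cong)
    subgoal for v using nn_exp_tail'[of "q v"] by (auto simp: q_def)
    done
  also have "\<dots> = (\<integral>\<^sup>+w. \<integral>\<^sup>+v. (if q v \<le> w \<and> norm v \<le> r then ennreal (exp (-w)) else 0) \<partial>lborel \<partial>lborel)"
    by (rule lborel_pair.Fubini'[symmetric]) (simp add: q_def)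
  also have "\<dots> = (\<integral>\<^sup>+w. (if 0 \<le> w then ennreal (exp (-w) * (unit_ball_vol (real CARD('d)) * (2*\<beta>\<^sup>2) powr (real CARD('d)/2))
            * min R w powr (real CARD('d)/2)) else 0) \<partial>lborel)"
  proof (rule nn_integral_cong)
    fix w :: real
    show "(\<integral>\<^sup>+v. (if q v \<le> w \<and> norm v \<le> r then ennreal (exp (-w)) else 0) \<partial>lborel) =
         (if 0 \<le> w then ennreal (exp (-w) * (unit_ball_vol (real CARD('d)) * (2*\<beta>\<^sup>2) powr (real CARD('d)/2))
            * min R w powr (real CARD('d)/2)) else 0)"
    proof (cases "0 \<le> w")
      case False
      have "q v \<le> w \<longleftrightarrow> False" for v
      proof -
        have "0 \<le> q v" by (simp add: q_def)
        then show ?thesis using False by auto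
      qed
      then show ?thesis using False by simp
    next
      case True
      have ind: "(if q v \<le> w \<and> norm v \<le> r then ennreal (exp (-w)) else 0)
          = ennreal (exp (-w)) * indicator (cball 0 (\<rho> w)) v" for v
      proof -
        have "q v \<le> w \<longleftrightarrow> (norm v)\<^sup>2 \<le> 2*\<beta>\<^sup>2*w" using b by (simp add: q_def field_simps)
        also have "\<dots> \<longleftrightarrow> norm v \<le> sqrt (2*\<beta>\<^sup>2*w)" using True b
          by (metis abs_norm_cancel real_sqrt_abs real_sqrt_le_iff)
        finally show ?thesis by (auto simp: \<rho>_def indicator_def)
      qed
      have rho0: "0 \<le> \<rho> w" using True r by (simp add: \<rho>_def)
      have pw: "\<rho> w ^ d = (2*\<beta>\<^sup>2) powr (real d/2) * min R w powr (real d/2)"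
      proof -
        have y0: "0 \<le> 2*\<beta>\<^sup>2*w" using True by simp
        have iff: "r \<le> sqrt (2*\<beta>\<^sup>2*w) \<longleftrightarrow> r\<^sup>2 \<le> 2*\<beta>\<^sup>2*w"
          using r by (metis abs_of_nonneg real_sqrt_abs real_sqrt_le_iff)
        have iff2: "R \<le> w \<longleftrightarrow> r\<^sup>2 \<le> 2*\<beta>\<^sup>2*w" using b by (simp add: R_def field_simps)
        have sq: "(\<rho> w)\<^sup>2 = 2*\<beta>\<^sup>2 * min R w"
        proof (cases "R \<le> w")
          case True
          then show ?thesis using iff iff2 b by (simp add: \<rho>_def R_def min_def)
        next
          case False
          then show ?thesis using iff iff2 y0 by (simp add: \<rho>_def min_def)
        qed
        have d0: "0 < d" by (simp add: d_def)
        have m0: "0 \<le> min R w" using True by (simp add: R_def)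
        have "\<rho> w ^ d = ((\<rho> w)\<^sup>2) powr (real d/2)"
        proof (cases "\<rho> w = 0")
          case True
          then show ?thesis using d0 by simp
        next
          case False
          then have "0 < \<rho> w" using rho0 by simp
          then have a: "\<rho> w ^ d = \<rho> w powr real d" by (simp add: powr_realpow)
          have b: "(\<rho> w)\<^sup>2 = \<rho> w powr 2" using \<open>0 < \<rho> w\<close> by (simp add: powr_realpow)
          have c: "(\<rho> w powr 2) powr (real d/2) = \<rho> w powr real d" by (simp add: powr_powr)
          show ?thesis using a b c by simp
        qed
        also have "\<dots> = (2*\<beta>\<^sup>2) powr (real d/2) * min R w powr (real d/2)"
          unfolding sq using m0 by (simp add: powr_mult)
        finally show ?thesis .
      qed
      have "(\<integral>\<^sup>+v. (if q v \<le> w \<and> norm v \<le> r then ennreal (exp (-w)) else 0) \<partial>lborel)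
          = (\<integral>\<^sup>+v. ennreal (exp (-w)) * indicator (cball (0::real^'d) (\<rho> w)) v \<partial>lborel)"
        by (simp add: ind)
      also have "\<dots> = ennreal (exp (-w)) * emeasure lborel (cball (0::real^'d) (\<rho> w))"
        by (rule nn_integral_cmult_indicator) simp
      also have "\<dots> = ennreal (exp (-w)) * ennreal (unit_ball_vol (real d) * \<rho> w ^ d)"
        using emeasure_cball[OF rho0, of "0::real^'d"] by (simp add: d_def)
      also have "\<dots> = ennreal (exp (-w) * (unit_ball_vol (real CARD('d)) * (2*\<beta>\<^sup>2) powr (real CARD('d)/2))
            * min R w powr (real CARD('d)/2))"
        unfolding pw by (simp add: ennreal_mult'[symmetric] d_def mult.assoc)
      finally show ?thesis using True by simp
    qed
  qed
  finally show ?thesis .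
qed

lemma stepB:
  fixes s R :: real
  assumes s: "0 < s" and R: "0 \<le> R"
  shows "(\<integral>\<^sup>+w. (if 0 \<le> w then ennreal (exp (-w) * min R w powr s) else 0) \<partial>lborel)
    = ennreal s * (\<integral>\<^sup>+t. ennreal (t powr (s-1) * exp (-t)) * indicator {0..R} t \<partial>lborel)"
proof -
  have "(\<integral>\<^sup>+w. (if 0 \<le> w then ennreal (exp (-w) * min R w powr s) else 0) \<partial>lborel)
     = (\<integral>\<^sup>+w. \<integral>\<^sup>+t. (if 0 \<le> t \<and> t \<le> R \<and> t \<le> w then ennreal (s * exp (-w) * t powr (s-1)) else 0) \<partial>lborel \<partial>lborel)"
  proof (rule nn_integral_cong)
    fix w :: real
    show "(if 0 \<le> w then ennreal (exp (-w) * min R w powr s) else 0) =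
      (\<integral>\<^sup>+t. (if 0 \<le> t \<and> t \<le> R \<and> t \<le> w then ennreal (s * exp (-w) * t powr (s-1)) else 0) \<partial>lborel)"
    proof (cases "0 \<le> w")
      case False
      then show ?thesis by (auto intro!: nn_integral_zero')
    next
      case True
      have m0: "0 \<le> min R w" using True R by simp
      have "(\<integral>\<^sup>+t. (if 0 \<le> t \<and> t \<le> R \<and> t \<le> w then ennreal (s * exp (-w) * t powr (s-1)) else 0) \<partial>lborel)
        = (\<integral>\<^sup>+t. ennreal (s * exp (-w)) * (ennreal (t powr (s-1)) * indicator {0..min R w} t) \<partial>lborel)"
        using s by (intro nn_integral_cong) (auto simp: indicator_def ennreal_mult)
      also have "\<dots> = ennreal (s * exp (-w)) * ennreal (min R w powr s / s)"
        by (subst nn_integral_cmult) (auto simp: nn_powr_0[OF s m0])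
      also have "\<dots> = ennreal (exp (-w) * min R w powr s)"
        using s by (simp add: ennreal_mult'[symmetric])
      finally show ?thesis using True by simp
    qed
  qed
  also have "\<dots> = (\<integral>\<^sup>+t. \<integral>\<^sup>+w. (if 0 \<le> t \<and> t \<le> R \<and> t \<le> w then ennreal (s * exp (-w) * t powr (s-1)) else 0) \<partial>lborel \<partial>lborel)"
    by (rule lborel_pair.Fubini') simp
  also have "\<dots> = (\<integral>\<^sup>+t. ennreal s * (ennreal (t powr (s-1) * exp (-t)) * indicator {0..R} t) \<partial>lborel)"
  proof (rule nn_integral_cong)
    fix t :: real
    show "(\<integral>\<^sup>+w. (if 0 \<le> t \<and> t \<le> R \<and> t \<le> w then ennreal (s * exp (-w) * t powr (s-1)) else 0) \<partial>lborel)
      = ennreal s * (ennreal (t powr (s-1) * exp (-t)) * indicator {0..R} t)"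
    proof (cases "0 \<le> t \<and> t \<le> R")
      case False
      then show ?thesis by (auto intro!: nn_integral_zero' simp: indicator_def)
    next
      case True
      have "(\<integral>\<^sup>+w. (if 0 \<le> t \<and> t \<le> R \<and> t \<le> w then ennreal (s * exp (-w) * t powr (s-1)) else 0) \<partial>lborel)
        = (\<integral>\<^sup>+w. ennreal (s * t powr (s-1)) * (if t \<le> w then ennreal (exp (-w)) else 0) \<partial>lborel)"
        using True s by (intro nn_integral_cong) (auto simp: ennreal_mult'[symmetric] mult_ac)
      also have "\<dots> = ennreal (s * t powr (s-1)) * ennreal (exp (-t))"
        by (subst nn_integral_cmult) (auto simp: nn_exp_tail')
      finally show ?thesis using True s by (simp add: indicator_def ennreal_mult'[symmetric] mult_ac)
    qed
  qed
  also have "\<dots> = ennreal s * (\<integral>\<^sup>+t. ennreal (t powr (s-1) * exp (-t)) * indicator {0..R} t \<partial>lborel)"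
    by (rule nn_integral_cmult) simp
  finally show ?thesis .
qed

lemma const_eq:
  fixes \<beta> s :: real assumes b: "0 < \<beta>" and s: "0 < s"
  shows "(2 * pi * \<beta>\<^sup>2) powr (- s) * (pi powr s / Gamma (s + 1) * (2*\<beta>\<^sup>2) powr s) * s = 1 / Gamma s"
proof -
  have "(2 * pi * \<beta>\<^sup>2) powr (- s) * (pi powr s * (2*\<beta>\<^sup>2) powr s) = 1"
  proof -
    have "pi powr s * (2*\<beta>\<^sup>2) powr s = (2 * pi * \<beta>\<^sup>2) powr s"
      using b by (simp add: powr_mult[symmetric] mult_ac)
    moreover have "0 < 2 * pi * \<beta>\<^sup>2" using b by simp
    ultimately show ?thesis using b by (simp add: powr_minus field_simps)
  qed
  moreover have "Gamma (s + 1) = s * Gamma s" using s by (intro Gamma_plus1) (auto dest: nonpos_Ints_nonpos)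
  moreover have "Gamma s > 0" using s by simp
  ultimately show ?thesis using s by (simp add: field_simps)
qed

lemma gauss_ball:
  fixes r \<beta> :: real
  assumes b: "0 < \<beta>" and r: "0 \<le> r"
  shows "emeasure (gaussian_iso \<beta> :: (real^'d) measure) (cball 0 r)
    = ennreal (1 / Gamma (real CARD('d)/2)) *
      (\<integral>\<^sup>+t. ennreal (t powr (real CARD('d)/2 - 1) * exp (-t)) * indicator {0..r\<^sup>2/(2*\<beta>\<^sup>2)} t \<partial>lborel)"
proof -
  define s where "s = real CARD('d)/2"
  define R where "R = r\<^sup>2/(2*\<beta>\<^sup>2)"
  define c where "c = (2 * pi * \<beta>\<^sup>2) powr (- s)"
  define K where "K = unit_ball_vol (real CARD('d)) * (2*\<beta>\<^sup>2) powr s"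
  have s0: "0 < s" by (simp add: s_def)
  have R0: "0 \<le> R" by (simp add: R_def)
  have c0: "0 \<le> c" by (simp add: c_def)
  have K0: "0 \<le> K" by (simp add: K_def)
  have "emeasure (gaussian_iso \<beta> :: (real^'d) measure) (cball 0 r)
     = (\<integral>\<^sup>+v. ennreal (c * exp (- (norm (v::real^'d))\<^sup>2 / (2 * \<beta>\<^sup>2))) * indicator (cball 0 r) v \<partial>lborel)"
    unfolding gaussian_iso_def c_def s_def by (subst emeasure_density) auto
  also have "\<dots> = (\<integral>\<^sup>+v. ennreal c * (if norm v \<le> r then ennreal (exp (-(norm (v::real^'d))\<^sup>2/(2*\<beta>\<^sup>2))) else 0) \<partial>lborel)"
    using c0 by (intro nn_integral_cong) (auto simp: indicator_def ennreal_mult)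
  also have "\<dots> = ennreal c * (\<integral>\<^sup>+v. (if norm v \<le> r then ennreal (exp (-(norm (v::real^'d))\<^sup>2/(2*\<beta>\<^sup>2))) else 0) \<partial>lborel)"
    by (rule nn_integral_cmult) simp
  also have "\<dots> = ennreal c * (\<integral>\<^sup>+w. (if 0 \<le> w then ennreal (exp (-w) * K * min R w powr s) else 0) \<partial>lborel)"
    unfolding stepA[OF b r] K_def R_def s_def ..
  also have "\<dots> = ennreal c * (\<integral>\<^sup>+w. ennreal K * (if 0 \<le> w then ennreal (exp (-w) * min R w powr s) else 0) \<partial>lborel)"
    using K0 by (intro arg_cong2[where f="(*)"] refl nn_integral_cong) (auto simp: ennreal_mult mult_ac)
  also have "\<dots> = ennreal c * (ennreal K * (ennreal s * (\<integral>\<^sup>+t. ennreal (t powr (s-1) * exp (-t)) * indicator {0..R} t \<partial>lborel)))"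
    by (subst nn_integral_cmult) (simp_all add: stepB[OF s0 R0])
  also have "\<dots> = ennreal (c * K * s) * (\<integral>\<^sup>+t. ennreal (t powr (s-1) * exp (-t)) * indicator {0..R} t \<partial>lborel)"
    using c0 K0 s0 by (simp add: ennreal_mult mult.assoc)
  also have "c * K * s = 1 / Gamma s"
    unfolding c_def K_def unit_ball_vol_def using const_eq[OF b s0] by (simp add: s_def)
  finally show ?thesis by (simp add: s_def R_def)
qed

lemma N_le_Gamma:
  fixes s R :: real assumes s: "0 < s"
  shows "(\<integral>\<^sup>+t. ennreal (t powr (s-1) * exp (-t)) * indicator {0..R} t \<partial>lborel) \<le> ennreal (Gamma s)"
  unfolding Gamma_conv_nn_integral_real[OF s]
  by (intro nn_integral_mono) (auto simp: indicator_def exp_minus field_simps)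

lemma N_finite:
  fixes s R :: real assumes s: "0 < s"
  shows "(\<integral>\<^sup>+t. ennreal (t powr (s-1) * exp (-t)) * indicator {0..R} t \<partial>lborel) < \<infinity>"
  using N_le_Gamma[OF s, of R] by (simp add: le_less_trans)

lemma lig_eq:
  fixes s R :: real assumes R: "0 \<le> R"
  shows "lower_inc_gamma s R = enn2real (\<integral>\<^sup>+t. ennreal (t powr (s-1) * exp (-t)) * indicator {0..R} t \<partial>lborel)"
proof -
  have "lower_inc_gamma s R = (LBINT t:{0..R}. t powr (s - 1) * exp (- t))"
    unfolding lower_inc_gamma_def using interval_integral_Icc[OF R, of "\<lambda>t. t powr (s - 1) * exp (- t)"]
    by (simp add: zero_ereal_def)
  also have "\<dots> = integral\<^sup>L lborel (\<lambda>t. indicator {0..R} t * (t powr (s - 1) * exp (- t)))"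
    by (simp add: set_lebesgue_integral_def)
  also have "\<dots> = enn2real (\<integral>\<^sup>+t. ennreal (indicator {0..R} t * (t powr (s - 1) * exp (- t))) \<partial>lborel)"
    by (rule integral_eq_nn_integral) auto
  also have "(\<integral>\<^sup>+t. ennreal (indicator {0..R} t * (t powr (s - 1) * exp (- t))) \<partial>lborel)
    = (\<integral>\<^sup>+t. ennreal (t powr (s-1) * exp (-t)) * indicator {0..R} t \<partial>lborel)"
    by (intro nn_integral_cong) (auto simp: indicator_def)
  finally show ?thesis .
qed

lemma lig_mono:
  fixes s x y :: real assumes s: "0 < s" and x: "0 \<le> x" and xy: "x \<le> y"
  shows "lower_inc_gamma s x \<le> lower_inc_gamma s y"
proof -
  have y: "0 \<le> y" using x xy by simp
  show ?thesis
    unfolding lig_eq[OF x] lig_eq[OF y]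
    apply (rule enn2real_mono)
     apply (intro nn_integral_mono)
     using xy apply (auto simp: indicator_def intro!: mult_right_mono)[1]
    using N_finite[OF s] by simp
qed

lemma gauss_measure:
  fixes r \<beta> :: real
  assumes b: "0 < \<beta>" and r: "0 \<le> r"
  shows "emeasure (gaussian_iso \<beta> :: (real^'d) measure) (cball 0 r)
    = ennreal (lower_inc_gamma (real CARD('d)/2) (r\<^sup>2/(2*\<beta>\<^sup>2)) / Gamma (real CARD('d)/2))"
proof -
  define s where "s = real CARD('d)/2"
  define R where "R = r\<^sup>2/(2*\<beta>\<^sup>2)"
  define N where "N = (\<integral>\<^sup>+t. ennreal (t powr (s-1) * exp (-t)) * indicator {0..R} t \<partial>lborel)"
  have s0: "0 < s" by (simp add: s_def)
  have R0: "0 \<le> R" by (simp add: R_def)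
  have "N = ennreal (enn2real N)" using N_finite[OF s0] by (simp add: N_def)
  also have "enn2real N = lower_inc_gamma s R" unfolding N_def lig_eq[OF R0] ..
  finally have N: "N = ennreal (lower_inc_gamma s R)" .
  have g: "0 < Gamma s" using s0 by simp
  have "emeasure (gaussian_iso \<beta> :: (real^'d) measure) (cball 0 r) = ennreal (1 / Gamma s) * N"
    unfolding gauss_ball[OF b r] N_def s_def R_def ..
  also have "\<dots> = ennreal (lower_inc_gamma s R / Gamma s)"
    unfolding N using g by (simp add: ennreal_mult'[symmetric])
  finally show ?thesis by (simp add: s_def R_def)
qed

theorem theorem2:
  fixes H :: "real ^ 'd \<Rightarrow> real ^ 'y"
    and D :: "(real ^ 'd) measure"
    and K_L K_U \<beta> \<tau> :: real
  assumes KL_pos: "0 < K_L" and KL_le_KU: "K_L \<le> K_U"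
    and bilip: "\<And>x1 x2. K_L * norm (x1 - x2) \<le> norm (H x1 - H x2)
                     \<and> norm (H x1 - H x2) \<le> K_U * norm (x1 - x2)"
    and D_prob: "prob_space D" and D_sets: "sets D = sets borel"
    and M_finite: "integrable (D \<Otimes>\<^sub>M D) (\<lambda>(x1, x2). norm (x1 - x2))"
    and beta_pos: "0 < \<beta>" and tau_pos: "0 < \<tau>"
    and fp_lt1: "measure (D \<Otimes>\<^sub>M D) {(x1, x2). norm (H x1 - H x2) \<le> \<tau>} < 1"
  shows "measure (D \<Otimes>\<^sub>M gaussian_iso \<beta>) {(x, \<delta>). norm (H x - H (x + \<delta>)) \<le> \<tau>}
     \<le> lower_inc_gamma (real CARD('d) / 2)
          ((1/2) * ((K_U / K_L) * ((\<integral>p. (case p of (x1, x2) \<Rightarrow> norm (x1 - x2)) \<partial>(D \<Otimes>\<^sub>M D)) / \<beta>)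
                    * (1 / (1 - measure (D \<Otimes>\<^sub>M D) {(x1, x2). norm (H x1 - H x2) \<le> \<tau>})))\<^sup>2)
        / Gamma (real CARD('d) / 2)"
proof -
  define P where "P = D \<Otimes>\<^sub>M D"
  define G where "G = (gaussian_iso \<beta> :: (real^'d) measure)"
  define M where "M = (\<integral>p. (case p of (x1, x2) \<Rightarrow> norm (x1 - x2)) \<partial>(D \<Otimes>\<^sub>M D))"
  define A where "A = {(x1, x2). norm (H x1 - H x2) \<le> \<tau>}"
  define \<alpha> where "\<alpha> = measure P A"
  define s where "s = real CARD('d) / 2"
  define r where "r = \<tau> / K_L"
  have KU_pos: "0 < K_U" using KL_pos KL_le_KU by simp
  have r0: "0 \<le> r" using tau_pos KL_pos by (simp add: r_def)
  have s0: "0 < s" by (simp add: s_def)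
  have spD: "space D = UNIV" using sets_eq_imp_space_eq[OF D_sets] by simp
  interpret D: prob_space D by (rule D_prob)
  interpret P: prob_space P unfolding P_def by (intro prob_space_pair D_prob)
  have spP: "space P = UNIV" by (simp add: P_def space_pair_measure spD)
  have "K_U-lipschitz_on UNIV H"
    using bilip KU_pos by (intro lipschitz_onI) (auto simp: dist_norm)
  then have "continuous_on UNIV H" by (rule lipschitz_on_continuous_on)
  then have "H \<in> borel_measurable borel" by (rule borel_measurable_continuous_onI)
  then have Hm[measurable]: "H \<in> borel_measurable D"
    using measurable_cong_sets[OF D_sets refl] by blast
  have A_sets: "A \<in> sets P"
  proof -
    have "{p \<in> space P. norm (H (fst p) - H (snd p)) \<le> \<tau>} \<in> sets P"
      unfolding P_def by measurable
    moreover have "{p \<in> space P. norm (H (fst p) - H (snd p)) \<le> \<tau>} = A"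
      by (auto simp: A_def spP)
    ultimately show ?thesis by simp
  qed
  define f where "f = (\<lambda>p. K_U * (case p of (x1, x2) \<Rightarrow> norm (x1 - x2 :: real^'d)))"
  have f_int: "integrable P f" unfolding f_def P_def using M_finite by (intro integrable_mult_right)
  have "measure P {p \<in> space P. \<tau> \<le> f p} \<le> (\<integral>p. f p \<partial>P) / \<tau>"
    by (rule integral_Markov_inequality_measure[OF f_int _ _ tau_pos])
       (use KU_pos in \<open>auto simp: f_def split: prod.splits intro!: AE_I2\<close>)
  also have "(\<integral>p. f p \<partial>P) = K_U * M" unfolding f_def M_def P_def by simp
  finally have markov: "measure P {p \<in> space P. \<tau> \<le> f p} \<le> K_U * M / \<tau>" .
  have "space P - A \<subseteq> {p \<in> space P. \<tau> \<le> f p}"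
  proof
    fix p assume "p \<in> space P - A"
    then obtain x1 x2 where p: "p = (x1, x2)" and "\<tau> < norm (H x1 - H x2)"
      by (cases p) (auto simp: A_def)
    moreover have "norm (H x1 - H x2) \<le> K_U * norm (x1 - x2)" using bilip by blast
    ultimately show "p \<in> {p \<in> space P. \<tau> \<le> f p}" by (simp add: f_def spP)
  qed
  then have "measure P (space P - A) \<le> measure P {p \<in> space P. \<tau> \<le> f p}"
  proof (rule P.finite_measure_mono)
    have [measurable]: "f \<in> borel_measurable P" using f_int by (rule borel_measurable_integrable)
    show "{p \<in> space P. \<tau> \<le> f p} \<in> sets P" by measurable
  qed
  moreover have "measure P (space P - A) = 1 - \<alpha>"
    using P.prob_compl[OF A_sets] by (simp add: \<alpha>_def)
  ultimately have one_minus: "1 - \<alpha> \<le> K_U * M / \<tau>" using markov by simp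
  have a1: "\<alpha> < 1" using fp_lt1 by (simp add: \<alpha>_def P_def A_def)
  have tau_le: "\<tau> \<le> K_U * M / (1 - \<alpha>)"
    using one_minus a1 tau_pos by (simp add: field_simps)
  define X where "X = (K_U / K_L) * (M / \<beta>) * (1 / (1 - \<alpha>))"
  have rX: "r / \<beta> \<le> X"
  proof -
    have "r \<le> K_U * M / (1 - \<alpha>) / K_L" unfolding r_def
      using divide_right_mono[OF tau_le, of K_L] KL_pos by simp
    then have "r / \<beta> \<le> K_U * M / (1 - \<alpha>) / K_L / \<beta>"
      using beta_pos by (intro divide_right_mono) auto
    then show ?thesis by (simp add: X_def field_simps)
  qed
  have Rle: "r\<^sup>2 / (2 * \<beta>\<^sup>2) \<le> (1/2) * X\<^sup>2"
  proof -
    have "0 \<le> r / \<beta>" using r0 beta_pos by simp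
    then have "(r / \<beta>)\<^sup>2 \<le> X\<^sup>2" using rX by (intro power_mono) auto
    then show ?thesis using beta_pos by (simp add: power_divide)
  qed
  have R0: "0 \<le> r\<^sup>2 / (2 * \<beta>\<^sup>2)" by simp
  have sigG: "sigma_finite_measure G"
    unfolding G_def gaussian_iso_def
    by (subst sigma_finite_measure.sigma_finite_iff_density_finite[OF sigma_finite_lborel]) auto
  have S_sub: "{(x, \<delta>). norm (H x - H (x + \<delta>)) \<le> \<tau>} \<subseteq> space D \<times> cball 0 r"
  proof safe
    fix x \<delta> :: "real^'d" assume h: "norm (H x - H (x + \<delta>)) \<le> \<tau>"
    have "K_L * norm (x - (x + \<delta>)) \<le> norm (H x - H (x + \<delta>))" using bilip by blast
    then have "K_L * norm \<delta> \<le> \<tau>" using h by (simp add: norm_minus_commute)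
    then show "\<delta> \<in> cball 0 r" using KL_pos by (simp add: r_def field_simps)
  qed (simp add: spD)
  have "emeasure (D \<Otimes>\<^sub>M G) {(x, \<delta>). norm (H x - H (x + \<delta>)) \<le> \<tau>} \<le> emeasure (D \<Otimes>\<^sub>M G) (space D \<times> cball 0 r)"
    by (rule emeasure_mono[OF S_sub]) (auto simp: G_def gaussian_iso_def)
  also have "\<dots> = emeasure D (space D) * emeasure G (cball 0 r)"
    by (rule sigma_finite_measure.emeasure_pair_measure_Times[OF sigG]) (auto simp: G_def gaussian_iso_def)
  also have "\<dots> = ennreal (lower_inc_gamma s (r\<^sup>2 / (2 * \<beta>\<^sup>2)) / Gamma s)"
    unfolding G_def gauss_measure[OF beta_pos r0] by (simp add: D.emeasure_space_1 s_def)
  finally have em: "emeasure (D \<Otimes>\<^sub>M G) {(x, \<delta>). norm (H x - H (x + \<delta>)) \<le> \<tau>}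
      \<le> ennreal (lower_inc_gamma s (r\<^sup>2 / (2 * \<beta>\<^sup>2)) / Gamma s)" .
  have lig0: "0 \<le> lower_inc_gamma s (r\<^sup>2 / (2 * \<beta>\<^sup>2))" using lig_eq[OF R0] by simp
  have "measure (D \<Otimes>\<^sub>M G) {(x, \<delta>). norm (H x - H (x + \<delta>)) \<le> \<tau>}
      \<le> lower_inc_gamma s (r\<^sup>2 / (2 * \<beta>\<^sup>2)) / Gamma s"
    unfolding measure_def using enn2real_mono[OF em] lig0 s0 by simp
  also have "\<dots> \<le> lower_inc_gamma s ((1/2) * X\<^sup>2) / Gamma s"
    using lig_mono[OF s0 R0 Rle] s0 by (intro divide_right_mono) auto
  finally show ?thesis by (simp add: G_def s_def X_def M_def \<alpha>_def P_def A_def)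
qed

end
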